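(* Let $\mathcal H_S,\mathcal H_E$ be finite-dimensional complex Hilbert spaces, $\Psi\in\mathcal H_S\otimes\mathcal H_E$ a unit vector, and $\{\phi_j\}_{j\in\mathcal I}$ a finite family of unit vectors in $\mathcal H_S$ such that $\Psi\in\mathrm{span}\{\phi_j\}\otimes\mathcal H_E$ (equivalently, $\rho_S=\mathrm{Tr}_E|\Psi\rangle\langle\Psi|$ is described by the $\phi_j$). Suppose $\Pr(\phi_j)>0$ for all $j$ and that the $\{\phi_j\}$ are indistinguishable relative to $E$. Then $\Psi=\Psi_S\otimes\Lambda$ for unit vectors $\Psi_S\in\mathrm{span}\{\phi_j\}$, $\Lambda\in\mathcal H_E$; in particular $\rho_S=|\Psi_S\rangle\langle\Psi_S|$ is pure, with $\Psi_S=\sum_{s\in\mathcal I}\psi_s\phi_s$ for some coefficients $\psi_s$.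
   Context: For the pure joint state $\Psi$ and unit vectors $\phi\in\mathcal H_S$, $\eta\in\mathcal H_E$: $\Pr(\phi)=\langle\phi|\rho_S|\phi\rangle$ with $\rho_S=\mathrm{Tr}_E|\Psi\rangle\langle\Psi|$, $\Pr(\phi\wedge\eta)=|\langle\phi\otimes\eta|\Psi\rangle|^2$, and $\Pr(\eta\mid\phi)=\Pr(\phi\wedge\eta)/\Pr(\phi)$. The state of $S$ is "described by" $\{\phi_j\}$ iff $\rho_S=\sum_{t,t'}w_{tt'}|\phi_t\rangle\langle\phi_{t'}|$ for some coefficients $w_{tt'}$. Values $\{\phi_j\}$ are indistinguishable relative to $E$ iff $\Pr(\eta\mid\phi_j)$ is independent of $j$ for every unit vector $\eta\in\mathcal H_E$. *)

theory Defs
  imports Complex_Main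
begin

text \<open>Finite-dimensional Hilbert spaces H_S, H_E are modelled as coordinate spaces
  'a \<Rightarrow> complex and 'b \<Rightarrow> complex over finite index types; the tensor product
  H_S \<otimes> H_E is ('a \<times> 'b) \<Rightarrow> complex.\<close>

definition cinner :: "('a::finite \<Rightarrow> complex) \<Rightarrow> ('a \<Rightarrow> complex) \<Rightarrow> complex" where
  "cinner x y = (\<Sum>i\<in>UNIV. cnj (x i) * y i)"

definition unit_vec :: "('a::finite \<Rightarrow> complex) \<Rightarrow> bool" where
  "unit_vec x \<longleftrightarrow> cinner x x = 1"

definition tensor :: "('a \<Rightarrow> complex) \<Rightarrow> ('b \<Rightarrow> complex) \<Rightarrow> ('a \<times> 'b \<Rightarrow> complex)" where
  "tensor \<phi> \<eta> = (\<lambda>(i, k). \<phi> i * \<eta> k)"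

definition ketbra :: "('a \<Rightarrow> complex) \<Rightarrow> ('a \<Rightarrow> complex) \<Rightarrow> 'a \<Rightarrow> 'a \<Rightarrow> complex" where
  "ketbra x y = (\<lambda>i i'. x i * cnj (y i'))"

definition rho_S :: "('a \<times> 'b::finite \<Rightarrow> complex) \<Rightarrow> 'a \<Rightarrow> 'a \<Rightarrow> complex" where
  "rho_S \<Psi> = (\<lambda>i i'. \<Sum>k\<in>UNIV. \<Psi> (i, k) * cnj (\<Psi> (i', k)))"

definition Pr :: "('a::finite \<times> 'b::finite \<Rightarrow> complex) \<Rightarrow> ('a \<Rightarrow> complex) \<Rightarrow> real" where
  "Pr \<Psi> \<phi> = Re (\<Sum>i\<in>UNIV. \<Sum>i'\<in>UNIV. cnj (\<phi> i) * rho_S \<Psi> i i' * \<phi> i')"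

definition Pr_joint :: "('a::finite \<times> 'b::finite \<Rightarrow> complex) \<Rightarrow> ('a \<Rightarrow> complex) \<Rightarrow> ('b \<Rightarrow> complex) \<Rightarrow> real" where
  "Pr_joint \<Psi> \<phi> \<eta> = (cmod (cinner (tensor \<phi> \<eta>) \<Psi>))\<^sup>2"

definition Pr_cond :: "('a::finite \<times> 'b::finite \<Rightarrow> complex) \<Rightarrow> ('b \<Rightarrow> complex) \<Rightarrow> ('a \<Rightarrow> complex) \<Rightarrow> real" where
  "Pr_cond \<Psi> \<eta> \<phi> = Pr_joint \<Psi> \<phi> \<eta> / Pr \<Psi> \<phi>"

definition indistinguishable :: "('a::finite \<times> 'b::finite \<Rightarrow> complex) \<Rightarrow> 'i set \<Rightarrow> ('i \<Rightarrow> 'a \<Rightarrow> complex) \<Rightarrow> bool" where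
  "indistinguishable \<Psi> I \<phi> \<longleftrightarrow>
     (\<forall>\<eta>::'b \<Rightarrow> complex. unit_vec \<eta> \<longrightarrow>
        (\<forall>j\<in>I. \<forall>j'\<in>I. Pr_cond \<Psi> \<eta> (\<phi> j) = Pr_cond \<Psi> \<eta> (\<phi> j')))"

end

theory Submission imports Defs begin

lemma cinner_self_real: "cinner x x = of_real (\<Sum>i\<in>UNIV. (cmod (x i))\<^sup>2)"
proof -
  have "\<And>i. cnj (x i) * x i = of_real ((cmod (x i))\<^sup>2)"
    by (metis complex_norm_square mult.commute)
  then show ?thesis unfolding cinner_def of_real_sum by presburger
qed

lemma cinner_self_zero: "cinner x x = 0 \<Longrightarrow> x = (\<lambda>_. 0)"
proof -
  assume "cinner x x = 0"
  then have "(\<Sum>i\<in>UNIV. (cmod (x i))\<^sup>2) = 0" unfolding cinner_self_real of_real_eq_0_iff .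
  then have "\<forall>i\<in>UNIV. (cmod (x i))\<^sup>2 = 0" by (subst (asm) sum_nonneg_eq_0_iff) auto
  then show "x = (\<lambda>_. 0)" by auto
qed

lemma cinner_zero_left[simp]: "cinner (\<lambda>_. 0) y = 0" by (simp add: cinner_def)

lemma cinner_scale_left: "cinner (\<lambda>i. c * x i) y = cnj c * cinner x y"
  by (simp add: cinner_def sum_distrib_left mult.assoc)
lemma cinner_scale_right: "cinner x (\<lambda>i. c * y i) = c * cinner x y"
  by (simp add: cinner_def sum_distrib_left algebra_simps)

lemma sum_UNIV_prod: "(\<Sum>x\<in>(UNIV::('a::finite\<times>'b::finite) set). h x) = (\<Sum>i\<in>UNIV. \<Sum>k\<in>UNIV. h (i,k))"
  by (simp add: sum.cartesian_product)

lemma cinner_tensor_v: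
  "cinner (tensor f \<eta>) \<Psi> = cinner \<eta> (\<lambda>k. \<Sum>a\<in>UNIV. cnj (f a) * \<Psi> (a, k))"
proof -
  have "cinner (tensor f \<eta>) \<Psi> = (\<Sum>a\<in>UNIV. \<Sum>k\<in>UNIV. cnj (\<eta> k) * (cnj (f a) * \<Psi> (a, k)))"
    unfolding cinner_def sum_UNIV_prod by (simp add: tensor_def mult.commute mult.left_commute)
  also have "\<dots> = (\<Sum>k\<in>UNIV. \<Sum>a\<in>UNIV. cnj (\<eta> k) * (cnj (f a) * \<Psi> (a, k)))"
    by (rule sum.swap)
  also have "\<dots> = cinner \<eta> (\<lambda>k. \<Sum>a\<in>UNIV. cnj (f a) * \<Psi> (a, k))"
    unfolding cinner_def by (simp add: sum_distrib_left)
  finally show ?thesis .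
qed

lemma Pr_v:
  "Pr \<Psi> f = Re (cinner (\<lambda>k. \<Sum>a\<in>UNIV. cnj (f a) * \<Psi> (a, k)) (\<lambda>k. \<Sum>a\<in>UNIV. cnj (f a) * \<Psi> (a, k)))"
proof -
  define X where "X i k = cnj (f i) * \<Psi> (i, k)" for i k
  define Y where "Y i k = f i * cnj (\<Psi> (i, k))" for i k
  have "(\<Sum>i\<in>UNIV. \<Sum>i'\<in>UNIV. cnj (f i) * rho_S \<Psi> i i' * f i') =
        (\<Sum>i\<in>UNIV. \<Sum>i'\<in>UNIV. \<Sum>k\<in>UNIV. X i k * Y i' k)"
    unfolding rho_S_def X_def Y_def
    by (simp add: sum_distrib_left sum_distrib_right mult.commute mult.left_commute)
  also have "\<dots> = (\<Sum>i\<in>UNIV. \<Sum>k\<in>UNIV. \<Sum>i'\<in>UNIV. X i k * Y i' k)"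
    by (rule sum.cong[OF refl], rule sum.swap)
  also have "\<dots> = (\<Sum>k\<in>UNIV. \<Sum>i\<in>UNIV. \<Sum>i'\<in>UNIV. X i k * Y i' k)"
    by (rule sum.swap)
  also have "\<dots> = (\<Sum>k\<in>UNIV. (\<Sum>i\<in>UNIV. X i k) * (\<Sum>i'\<in>UNIV. Y i' k))"
    by (simp add: sum_product)
  also have "\<dots> = cinner (\<lambda>k. \<Sum>a\<in>UNIV. cnj (f a) * \<Psi> (a, k)) (\<lambda>k. \<Sum>a\<in>UNIV. cnj (f a) * \<Psi> (a, k))"
    unfolding cinner_def X_def Y_def cnj_sum by (simp add: mult.commute)
  finally show ?thesis unfolding Pr_def by simp
qed

lemma cinner_tensor_tensor: "cinner (tensor f g) (tensor f' g') = cinner f f' * cinner g g'"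
  unfolding cinner_def sum_UNIV_prod
  by (simp add: tensor_def sum_product algebra_simps)

lemma rho_S_tensor: "rho_S (tensor f g) = (\<lambda>i i'. f i * cnj (f i') * cinner g g)"
  unfolding rho_S_def tensor_def cinner_def
  by (simp add: sum_distrib_left mult.commute mult.left_commute)

lemma cinner_self_Re: "cinner x x = of_real (Re (cinner x x))"
  by (simp add: cinner_self_real)

lemma cinner_self_ge0: "Re (cinner x x) \<ge> 0"
  by (simp add: cinner_self_real sum_nonneg)


theorem theorem9:
  fixes \<Psi> :: "'a::finite \<times> 'b::finite \<Rightarrow> complex"
    and \<phi> :: "'i \<Rightarrow> 'a \<Rightarrow> complex"
    and I :: "'i set"
  assumes "finite I"
    and "unit_vec \<Psi>"
    and "\<forall>j\<in>I. unit_vec (\<phi> j)"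
    and "\<exists>\<chi>::'i \<Rightarrow> 'b \<Rightarrow> complex. \<Psi> = (\<lambda>x. \<Sum>j\<in>I. tensor (\<phi> j) (\<chi> j) x)"
    and "\<forall>j\<in>I. Pr \<Psi> (\<phi> j) > 0"
    and "indistinguishable \<Psi> I \<phi>"
  shows "\<exists>(\<psi>::'i \<Rightarrow> complex) (\<Lambda>::'b \<Rightarrow> complex).
           unit_vec (\<lambda>i. \<Sum>s\<in>I. \<psi> s * \<phi> s i) \<and> unit_vec \<Lambda> \<and>
           \<Psi> = tensor (\<lambda>i. \<Sum>s\<in>I. \<psi> s * \<phi> s i) \<Lambda> \<and>
           rho_S \<Psi> = ketbra (\<lambda>i. \<Sum>s\<in>I. \<psi> s * \<phi> s i) (\<lambda>i. \<Sum>s\<in>I. \<psi> s * \<phi> s i)"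
proof -
  obtain \<chi> :: "'i \<Rightarrow> 'b \<Rightarrow> complex" where chi: "\<Psi> = (\<lambda>x. \<Sum>j\<in>I. tensor (\<phi> j) (\<chi> j) x)"
    using assms(4) by blast
  have chi2: "\<Psi> (a, k) = (\<Sum>j\<in>I. \<phi> j a * \<chi> j k)" for a k
    by (subst chi) (simp add: tensor_def)
  have PsiU: "cinner \<Psi> \<Psi> = 1" using assms(2) unfolding unit_vec_def .
  have "I \<noteq> {}"
  proof
    assume "I = {}"
    then have "\<Psi> = (\<lambda>_. 0)" using chi by simp
    then show False using PsiU by simp
  qed
  then obtain j0 where j0: "j0 \<in> I" by blast
  define v where "v j = (\<lambda>k. \<Sum>a\<in>UNIV. cnj (\<phi> j a) * \<Psi> (a, k))" for j
  have Prv: "cinner (v j) (v j) = of_real (Pr \<Psi> (\<phi> j))" for j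
    unfolding Pr_v v_def by (rule cinner_self_Re)
  have joint: "Pr_joint \<Psi> (\<phi> j) \<eta> = (cmod (cinner \<eta> (v j)))\<^sup>2" for j \<eta>
    unfolding Pr_joint_def cinner_tensor_v v_def ..
  have key: "cinner \<eta> (v j) = 0" if h: "cinner \<eta> (v j0) = 0" and j: "j \<in> I" for \<eta> j
  proof (cases "\<eta> = (\<lambda>_. 0)")
    case True
    then show ?thesis by simp
  next
    case False
    define r where "r = Re (cinner \<eta> \<eta>)"
    have r0: "r \<ge> 0" unfolding r_def by (rule cinner_self_ge0)
    have rr: "cinner \<eta> \<eta> = of_real r" unfolding r_def by (rule cinner_self_Re)
    have "r \<noteq> 0" using False cinner_self_zero rr by force
    with r0 have rpos: "r > 0" by simp
    define c where "c = 1 / sqrt r"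
    define \<eta>' where "\<eta>' = (\<lambda>k. complex_of_real c * \<eta> k)"
    have "cinner \<eta>' \<eta>' = of_real (c * c * r)"
      unfolding \<eta>'_def cinner_scale_left cinner_scale_right rr by simp
    also have "c * c * r = 1" unfolding c_def using rpos
      by (simp add: real_sqrt_mult[symmetric]) 
    finally have u: "unit_vec \<eta>'" unfolding unit_vec_def by simp
    have sc: "cinner \<eta>' (v i) = of_real c * cinner \<eta> (v i)" for i
      unfolding \<eta>'_def cinner_scale_left by simp
    have "Pr_cond \<Psi> \<eta>' (\<phi> j) = Pr_cond \<Psi> \<eta>' (\<phi> j0)"
      using assms(6) u j j0 unfolding indistinguishable_def by blast
    also have "\<dots> = 0" unfolding Pr_cond_def joint sc h by simp
    finally have "(cmod (cinner \<eta>' (v j)))\<^sup>2 / Pr \<Psi> (\<phi> j) = 0"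
      unfolding Pr_cond_def joint .
    moreover have "Pr \<Psi> (\<phi> j) \<noteq> 0" using assms(5) j by auto
    ultimately have "cinner \<eta>' (v j) = 0" by simp
    moreover have "c \<noteq> 0" unfolding c_def using rpos by simp
    ultimately show ?thesis unfolding sc by simp
  qed
  define p0 where "p0 = Pr \<Psi> (\<phi> j0)"
  have p0: "p0 > 0" unfolding p0_def using assms(5) j0 by blast
  define c0 where "c0 = 1 / sqrt p0"
  have c0: "c0 \<noteq> 0" unfolding c0_def using p0 by simp
  define \<Lambda> where "\<Lambda> = (\<lambda>k. complex_of_real c0 * v j0 k)"
  have "cinner \<Lambda> \<Lambda> = of_real (c0 * c0 * p0)"
    unfolding \<Lambda>_def cinner_scale_left cinner_scale_right Prv p0_def by simp
  also have "c0 * c0 * p0 = 1" unfolding c0_def using p0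
    by (simp add: real_sqrt_mult[symmetric])
  finally have LU: "cinner \<Lambda> \<Lambda> = 1" by simp
  have perp: "cinner \<eta> (v j) = 0" if "cinner \<eta> \<Lambda> = 0" "j \<in> I" for \<eta> j
  proof -
    have "cinner \<eta> (v j0) = 0" using that(1) c0 unfolding \<Lambda>_def cinner_scale_right by simp
    then show ?thesis using key that(2) by blast
  qed
  have step4: "(\<Sum>k\<in>UNIV. cnj (\<eta> k) * \<Psi> (a, k)) = 0" if h: "cinner \<eta> \<Lambda> = 0" for \<eta> a
  proof -
    define z where "z = (\<lambda>a. \<Sum>k\<in>UNIV. cnj (\<eta> k) * \<Psi> (a, k))"
    define cc where "cc j = cinner \<eta> (\<chi> j)" for j
    have z: "z = (\<lambda>a. \<Sum>j\<in>I. \<phi> j a * cc j)"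
    proof
      fix a
      have "z a = (\<Sum>k\<in>UNIV. \<Sum>j\<in>I. \<phi> j a * (cnj (\<eta> k) * \<chi> j k))"
        unfolding z_def chi2 by (simp add: sum_distrib_left mult.left_commute)
      also have "\<dots> = (\<Sum>j\<in>I. \<Sum>k\<in>UNIV. \<phi> j a * (cnj (\<eta> k) * \<chi> j k))"
        by (rule sum.swap)
      also have "\<dots> = (\<Sum>j\<in>I. \<phi> j a * cc j)"
        unfolding cc_def cinner_def by (simp add: sum_distrib_left)
      finally show "z a = (\<Sum>j\<in>I. \<phi> j a * cc j)" .
    qed
    have zj: "cinner (\<phi> j) z = cinner \<eta> (v j)" for j
    proof -
      have "cinner (\<phi> j) z = (\<Sum>a\<in>UNIV. \<Sum>k\<in>UNIV. cnj (\<eta> k) * (cnj (\<phi> j a) * \<Psi> (a, k)))"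
        unfolding z_def cinner_def by (simp add: sum_distrib_left mult.left_commute)
      also have "\<dots> = (\<Sum>k\<in>UNIV. \<Sum>a\<in>UNIV. cnj (\<eta> k) * (cnj (\<phi> j a) * \<Psi> (a, k)))"
        by (rule sum.swap)
      also have "\<dots> = cinner \<eta> (v j)"
        unfolding v_def cinner_def by (simp add: sum_distrib_left)
      finally show ?thesis .
    qed
    have "cinner z z = cinner (\<lambda>a. \<Sum>j\<in>I. \<phi> j a * cc j) z"
      by (simp only: z[symmetric])
    also have "\<dots> = (\<Sum>a\<in>UNIV. \<Sum>j\<in>I. cnj (cc j) * (cnj (\<phi> j a) * z a))"
      unfolding cinner_def by (simp add: sum_distrib_left sum_distrib_right mult.commute mult.left_commute)
    also have "\<dots> = (\<Sum>j\<in>I. \<Sum>a\<in>UNIV. cnj (cc j) * (cnj (\<phi> j a) * z a))"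
      by (rule sum.swap)
    also have "\<dots> = (\<Sum>j\<in>I. cnj (cc j) * cinner (\<phi> j) z)"
      unfolding cinner_def by (simp add: sum_distrib_left)
    also have "\<dots> = 0" using zj perp[OF h] by simp
    finally have "z = (\<lambda>_. 0)" by (rule cinner_self_zero)
    then show ?thesis unfolding z_def by metis
  qed
  define PsiS where "PsiS = (\<lambda>a. \<Sum>k\<in>UNIV. cnj (\<Lambda> k) * \<Psi> (a, k))"
  have fact: "\<Psi> (a, k) = PsiS a * \<Lambda> k" for a k
  proof -
    define w where "w = (\<lambda>k. \<Psi> (a, k) - PsiS a * \<Lambda> k)"
    have A: "(\<Sum>k\<in>UNIV. cnj (\<Psi> (a, k)) * \<Lambda> k) = cnj (PsiS a)"
      unfolding PsiS_def by (simp add: mult.commute)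
    have "cinner w \<Lambda> = (\<Sum>k\<in>UNIV. cnj (\<Psi> (a, k)) * \<Lambda> k) - cnj (PsiS a) * cinner \<Lambda> \<Lambda>"
      unfolding w_def cinner_def by (simp add: sum_subtractf sum_distrib_left algebra_simps)
    then have wL: "cinner w \<Lambda> = 0" using A LU by simp
    have B: "(\<Sum>k\<in>UNIV. cnj (w k) * \<Psi> (a, k)) = 0" using step4[OF wL] .
    have "cinner w w = (\<Sum>k\<in>UNIV. cnj (w k) * \<Psi> (a, k)) - PsiS a * cinner w \<Lambda>"
      unfolding cinner_def
      by (subst (2) w_def) (simp add: algebra_simps sum_subtractf sum_distrib_left)
    also have "\<dots> = 0" using B wL by simp
    finally have "w = (\<lambda>_. 0)" by (rule cinner_self_zero)
    then show ?thesis unfolding w_def by (metis eq_iff_diff_eq_0)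
  qed
  have PsiT: "\<Psi> = tensor PsiS \<Lambda>"
    by (auto simp: tensor_def fact)
  define \<psi> where "\<psi> s = cinner \<Lambda> (\<chi> s)" for s
  have PsiS_eq: "PsiS = (\<lambda>i. \<Sum>s\<in>I. \<psi> s * \<phi> s i)"
  proof
    fix a
    have "PsiS a = (\<Sum>k\<in>UNIV. \<Sum>j\<in>I. \<phi> j a * (cnj (\<Lambda> k) * \<chi> j k))"
      unfolding PsiS_def chi2 by (simp add: sum_distrib_left mult.left_commute)
    also have "\<dots> = (\<Sum>j\<in>I. \<Sum>k\<in>UNIV. \<phi> j a * (cnj (\<Lambda> k) * \<chi> j k))"
      by (rule sum.swap)
    also have "\<dots> = (\<Sum>s\<in>I. \<psi> s * \<phi> s a)"
      unfolding \<psi>_def cinner_def by (simp add: sum_distrib_left mult.commute)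
    finally show "PsiS a = (\<Sum>s\<in>I. \<psi> s * \<phi> s a)" .
  qed
  have SU: "cinner PsiS PsiS = 1"
    using PsiU LU unfolding PsiT cinner_tensor_tensor by simp
  have rho: "rho_S \<Psi> = ketbra PsiS PsiS"
    unfolding PsiT rho_S_tensor LU ketbra_def by simp
  show ?thesis
    apply (rule exI[of _ \<psi>], rule exI[of _ \<Lambda>])
    unfolding PsiS_eq[symmetric] unit_vec_def using SU LU PsiT rho by blast
qed

end
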